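(* For $i\ne j\in\{1,2\}$ let $a_i=\exp\left(-\frac{\gamma_i}{p_i\ell(r_{ii})}\right)$ and $b_i=\exp\left(-\frac{\gamma_i}{p_i\ell(r_{ii})}\right)\left[1+\gamma_i\frac{p_j\ell(r_{ji})}{p_i\ell(r_{ii})}\right]^{-1}$, with all $p_i,\gamma_i,\ell(r_{ab})>0$. Then $\frac{b_1}{a_1}+\frac{b_2}{a_2}\ge 1$ (and hence the stability region $\mathcal{R}^{\mathrm{IAN}}=\mathcal{R}_1\cup\mathcal{R}_2$ is convex) if and only if $$\gamma_1\gamma_2\le\frac{\ell(r_{11})\ell(r_{22})}{\ell(r_{12})\ell(r_{21})}.$$
   Context: Two-user interference channel with Rayleigh fading (unit-mean exponential channel power gains, independent), unit noise power, transmit powers $p_i$, SINR thresholds $\gamma_i$, distances $r_{ab}$ from transmitter $S_a$ to receiver $D_b$, and non-increasing pathloss $\ell$. $a_i$ is the probability that $D_i$ decodes $S_i$ when only $S_i$ transmits; $b_i$ is that probability when both transmit and both receivers treat interference as noise (IAN). The stability region is $\mathcal{R}_1\cup\mathcal{R}_2$ with $\mathcal{R}_1=\{(\lambda_1,\lambda_2):\lambda_1/a_1+(a_1-b_1)\lambda_2/(a_1b_2)<1,\ \lambda_2<b_2\}$ and $\mathcal{R}_2=\{(\lambda_1,\lambda_2):\lambda_2/a_2+(a_2-b_2)\lambda_1/(a_2b_1)<1,\ \lambda_1<b_1\}$. *)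

theory Defs
  imports "HOL-Analysis.Analysis"
begin

text \<open>Two-user interference channel. Users are indexed by 1 and 2.
  p i: transmit power of S_i, g i: SINR threshold gamma_i,
  L: pathloss function, r a b: distance from S_a to D_b.\<close>

definition succ_alone :: "(nat \<Rightarrow> real) \<Rightarrow> (nat \<Rightarrow> real) \<Rightarrow> (real \<Rightarrow> real)
    \<Rightarrow> (nat \<Rightarrow> nat \<Rightarrow> real) \<Rightarrow> nat \<Rightarrow> real" where
  "succ_alone p g L r i = exp (- g i / (p i * L (r i i)))"

definition succ_IAN :: "(nat \<Rightarrow> real) \<Rightarrow> (nat \<Rightarrow> real) \<Rightarrow> (real \<Rightarrow> real)
    \<Rightarrow> (nat \<Rightarrow> nat \<Rightarrow> real) \<Rightarrow> nat \<Rightarrow> nat \<Rightarrow> real" where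
  "succ_IAN p g L r i j = exp (- g i / (p i * L (r i i)))
      * inverse (1 + g i * (p j * L (r j i)) / (p i * L (r i i)))"

definition region1 :: "real \<Rightarrow> real \<Rightarrow> real \<Rightarrow> real \<Rightarrow> (real \<times> real) set" where
  "region1 a1 a2 b1 b2 = {(l1, l2). 0 \<le> l1 \<and> 0 \<le> l2 \<and>
      l1 / a1 + (a1 - b1) * l2 / (a1 * b2) < 1 \<and> l2 < b2}"

definition region2 :: "real \<Rightarrow> real \<Rightarrow> real \<Rightarrow> real \<Rightarrow> (real \<times> real) set" where
  "region2 a1 a2 b1 b2 = {(l1, l2). 0 \<le> l1 \<and> 0 \<le> l2 \<and>
      l2 / a2 + (a2 - b2) * l1 / (a2 * b1) < 1 \<and> l1 < b1}"

end

theory Submission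
  imports Defs
begin

lemma kern:
  fixes x y u v :: real
  assumes "0<u" "u\<le>1" "0<v" "v\<le>1" "u + v\<ge>1" "x\<ge>0" "y\<ge>0" "x + (1-u) * y/v<1" "y<v"
  shows "y + (1-v) * x/u<1"
proof -
  have h: "x * v + (1-u) * y < v" using assms(8) assms(3) by (simp add: field_simps)
  have "u * y + (1-v) * x < u"
  proof (cases "v=1")
    case True thus ?thesis using assms by simp
  next
    case False
    hence "1-v>0" using assms by simp
    hence "(1-v) * (x * v + (1-u) * y) < (1-v) * v" using h by simp
    moreover have "(u + v-1) * (y-v) \<le> 0" using assms by (intro mult_nonneg_nonpos) auto
    ultimately have "v * (u * y + (1-v) * x) < v * u" by (simp add: algebra_simps) 
    thus ?thesis using assms(3) by simp
  qed
  thus ?thesis using assms(1) by (simp add: field_simps)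
qed

theorem mainTheorem6:
  fixes p g :: "nat \<Rightarrow> real" and L :: "real \<Rightarrow> real" and r :: "nat \<Rightarrow> nat \<Rightarrow> real"
  assumes p_pos: "p 1 > 0" "p 2 > 0"
    and g_pos: "g 1 > 0" "g 2 > 0"
    and r_pos: "\<And>a b. a \<in> {1,2} \<Longrightarrow> b \<in> {1,2} \<Longrightarrow> r a b > 0"
    and l_pos: "\<And>a b. a \<in> {1,2} \<Longrightarrow> b \<in> {1,2} \<Longrightarrow> L (r a b) > 0"
    and l_noninc: "\<And>x y. 0 < x \<Longrightarrow> x \<le> y \<Longrightarrow> L y \<le> L x"
  defines "a1 \<equiv> succ_alone p g L r 1" and "a2 \<equiv> succ_alone p g L r 2"
    and "b1 \<equiv> succ_IAN p g L r 1 2" and "b2 \<equiv> succ_IAN p g L r 2 1"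
  shows "(b1 / a1 + b2 / a2 \<ge> 1 \<longleftrightarrow>
            g 1 * g 2 \<le> L (r 1 1) * L (r 2 2) / (L (r 1 2) * L (r 2 1)))
         \<and> (b1 / a1 + b2 / a2 \<ge> 1 \<longrightarrow> convex (region1 a1 a2 b1 b2 \<union> region2 a1 a2 b1 b2))"
proof -
  let ?L11 = "L (r 1 1)" and ?L22 = "L (r 2 2)" and ?L12 = "L (r 1 2)" and ?L21 = "L (r 2 1)"
  have L11: "?L11 > 0" and L22: "?L22 > 0" and L12: "?L12 > 0" and L21: "?L21 > 0"
    using l_pos by auto
  define x where "x = g 1 * (p 2 * ?L21) / (p 1 * ?L11)"
  define y where "y = g 2 * (p 1 * ?L12) / (p 2 * ?L22)"
  have xp: "x > 0" unfolding x_def using p_pos g_pos L11 L21 by simp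
  have yp: "y > 0" unfolding y_def using p_pos g_pos L22 L12 by simp
  have a1p: "a1 > 0" and a2p: "a2 > 0" unfolding a1_def a2_def succ_alone_def by auto
  have u0: "b1 = a1 * inverse (1+x)" unfolding a1_def b1_def succ_alone_def succ_IAN_def x_def
    by simp
  have u: "b1 / a1 = 1/(1+x)" using u0 a1p by (simp add: divide_inverse)
  have v0: "b2 = a2 * inverse (1+y)" unfolding a2_def b2_def succ_alone_def succ_IAN_def y_def
    by simp
  have v: "b2 / a2 = 1/(1+y)" using v0 a2p by (simp add: divide_inverse)
  have xy: "x*y = g 1 * g 2 * ?L21 * ?L12 / (?L11 * ?L22)"
    unfolding x_def y_def using p_pos by (simp add: field_simps)
  have part1: "(b1 / a1 + b2 / a2 \<ge> 1) \<longleftrightarrow> x*y \<le> 1"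
  proof -
    have "(1/(1+x) + 1/(1+y) \<ge> 1) \<longleftrightarrow> (1+x)*(1+y) \<le> (1+y) + (1+x)"
    proof -
      have d: "(1+x)*(1+y) > 0" using xp yp by simp
      have "1/(1+x) + 1/(1+y) = ((1+y) + (1+x)) / ((1+x)*(1+y))" using xp yp by (simp add: field_simps)
      thus ?thesis using d by (simp add: le_divide_eq)
    qed
    also have "\<dots> \<longleftrightarrow> x*y \<le> 1" by (simp add: algebra_simps)
    finally show ?thesis using u v by simp
  qed
  have part2: "x*y \<le> 1 \<longleftrightarrow> g 1 * g 2 \<le> ?L11 * ?L22 / (?L12 * ?L21)"
    unfolding xy using L11 L22 L12 L21 by (simp add: field_simps)
  define uu where "uu = b1/a1"
  define vv where "vv = b2/a2"
  have uu: "0 < uu" "uu \<le> 1" unfolding uu_def u using xp by auto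
  have vv: "0 < vv" "vv \<le> 1" unfolding vv_def v using yp by auto
  have b1e: "b1 = uu * a1" and b2e: "b2 = vv * a2" unfolding uu_def vv_def using a1p a2p by auto
  have conv: "convex (region1 a1 a2 b1 b2 \<union> region2 a1 a2 b1 b2)" if S: "uu + vv \<ge> 1"
  proof -
    define Q where "Q = {(l1::real, l2::real). 0 \<le> l1 \<and> 0 \<le> l2 \<and>
      l1 / a1 + (a1 - b1) * l2 / (a1 * b2) < 1 \<and> l2 / a2 + (a2 - b2) * l1 / (a2 * b1) < 1}"
    have e1: "l1 / a1 + (a1 - b1) * l2 / (a1 * b2) = l1/a1 + (1-uu)*(l2/a2)/vv" for l1 l2
      unfolding b1e b2e using a1p a2p uu vv by (simp add: field_simps)
    have e2: "l2 / a2 + (a2 - b2) * l1 / (a2 * b1) = l2/a2 + (1-vv)*(l1/a1)/uu" for l1 l2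
      unfolding b1e b2e using a1p a2p uu vv by (simp add: field_simps)
    have lt1: "l2 < b2 \<longleftrightarrow> l2/a2 < vv" for l2 unfolding b2e using a2p by (simp add: field_simps)
    have lt2: "l1 < b1 \<longleftrightarrow> l1/a1 < uu" for l1 unfolding b1e using a1p by (simp add: field_simps)
    have "region1 a1 a2 b1 b2 \<union> region2 a1 a2 b1 b2 = Q"
    proof (intro equalityI subsetI)
      fix z assume "z \<in> region1 a1 a2 b1 b2 \<union> region2 a1 a2 b1 b2"
      then obtain l1 l2 where z: "z = (l1,l2)" and
        h: "(0 \<le> l1 \<and> 0 \<le> l2 \<and> l1/a1 + (1-uu)*(l2/a2)/vv < 1 \<and> l2/a2 < vv) \<or>
            (0 \<le> l1 \<and> 0 \<le> l2 \<and> l2/a2 + (1-vv)*(l1/a1)/uu < 1 \<and> l1/a1 < uu)"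
        unfolding region1_def region2_def e1 e2 lt1 lt2 by auto
      have n1: "l1/a1 \<ge> 0" "l2/a2 \<ge> 0" using h a1p a2p by auto
      from h have "l1/a1 + (1-uu)*(l2/a2)/vv < 1 \<and> l2/a2 + (1-vv)*(l1/a1)/uu < 1"
      proof
        assume "0 \<le> l1 \<and> 0 \<le> l2 \<and> l1/a1 + (1-uu)*(l2/a2)/vv < 1 \<and> l2/a2 < vv"
        thus ?thesis using kern[of uu vv "l1/a1" "l2/a2"] uu vv S n1 by auto
      next
        assume "0 \<le> l1 \<and> 0 \<le> l2 \<and> l2/a2 + (1-vv)*(l1/a1)/uu < 1 \<and> l1/a1 < uu"
        thus ?thesis using kern[of vv uu "l2/a2" "l1/a1"] uu vv S n1 by auto
      qed
      thus "z \<in> Q" unfolding Q_def z e1 e2 using h by auto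
    next
      fix z assume "z \<in> Q"
      then obtain l1 l2 where z: "z = (l1,l2)" and
        h: "0 \<le> l1" "0 \<le> l2" "l1/a1 + (1-uu)*(l2/a2)/vv < 1" "l2/a2 + (1-vv)*(l1/a1)/uu < 1"
        unfolding Q_def e1 e2 by auto
      have n1: "l1/a1 \<ge> 0" "l2/a2 \<ge> 0" using h a1p a2p by auto
      have "l2/a2 < vv \<or> l1/a1 < uu"
      proof (rule ccontr)
        assume "\<not> ?thesis"
        hence c: "l2/a2 \<ge> vv" "l1/a1 \<ge> uu" by auto
        have "(1-uu)*(l2/a2)/vv \<ge> (1-uu)* vv/vv"
          using c uu vv by (intro divide_right_mono mult_left_mono) auto
        hence "(1-uu)*(l2/a2)/vv \<ge> 1-uu" using vv by simp
        thus False using h(3) c by linarith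
      qed
      thus "z \<in> region1 a1 a2 b1 b2 \<union> region2 a1 a2 b1 b2"
        unfolding region1_def region2_def z e1 e2 lt1 lt2 using h by auto
    qed
    moreover have "convex Q"
    proof -
      define c1 where "c1 = 1/a1" define c2 where "c2 = (a1 - b1)/(a1*b2)"
      define d1 where "d1 = 1/a2" define d2 where "d2 = (a2 - b2)/(a2*b1)"
      have f: "\<And>w1 w2. w1 / a1 + (a1 - b1) * w2 / (a1 * b2) = c1*w1 + c2*w2"
              "\<And>w1 w2. w2 / a2 + (a2 - b2) * w1 / (a2 * b1) = d2*w1 + d1*w2"
        unfolding c1_def c2_def d1_def d2_def by (simp_all add: field_simps)
      have "Q = {z. inner (1::real,0::real) z \<ge> 0} \<inter> {z. inner (0::real,1::real) z \<ge> 0}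
           \<inter> {z. inner (c1,c2) z < 1} \<inter> {z. inner (d2,d1) z < 1}"
        unfolding Q_def f by (auto simp: inner_prod_def)
      moreover have "convex {z. inner (1::real,0::real) z \<ge> 0}"
        using convex_halfspace_ge by blast
      moreover have "convex {z. inner (0::real,1::real) z \<ge> 0}"
        using convex_halfspace_ge by blast
      moreover have "convex {z. inner (c1,c2) z < (1::real)}"
        using convex_halfspace_lt by blast
      moreover have "convex {z. inner (d2,d1) z < (1::real)}"
        using convex_halfspace_lt by blast
      ultimately show ?thesis by (simp add: convex_Int)
    qed
    ultimately show ?thesis by simp
  qed
  show ?thesis using part1 part2 conv uu_def vv_def by auto
qed

end
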